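(* For integers $r,k\ge0$ and real $\alpha$ with $\alpha>k>r$, writing $C_\beta:=H_\beta^3+3H_\beta H_\beta^{(2)}+2H_\beta^{(3)}$ and $Q_\beta:=H_\beta^4+6H_\beta^2H_\beta^{(2)}+8H_\beta H_\beta^{(3)}+3\big(H_\beta^{(2)}\big)^2+6H_\beta^{(4)}$, $$\sum_{n=1}^\infty\frac{C_{n+\alpha}}{(n+r)(n+k)}=\frac{k-\alpha}{k-r}\left\{\frac{Q_{\alpha-k}}{\alpha-k}-\sum_{j=1}^k\frac{C_{\alpha+j-k}}{j(\alpha+j-k)}\right\}+\frac{\alpha-r}{k-r}\left\{\frac{Q_{\alpha-r}}{\alpha-r}-\sum_{j=1}^r\frac{C_{\alpha+j-r}}{j(\alpha+j-r)}\right\}.$$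
   Context: Shifted harmonic numbers: for a real $\alpha$ that is not a negative integer, $H_\alpha := \sum_{k=1}^\infty\left(\frac1k-\frac1{k+\alpha}\right)$ and, for integers $m\ge 2$, $H_\alpha^{(m)} := \sum_{k=1}^\infty\left(\frac1{k^m}-\frac1{(k+\alpha)^m}\right)=\zeta(m)-\zeta(m,\alpha+1)$, where $\zeta$ is the Riemann zeta function and $\zeta(s,\alpha+1)=\sum_{n=1}^\infty (n+\alpha)^{-s}$ is the Hurwitz zeta function. Powers such as $H_\alpha^2$ mean $(H_\alpha)^2$. Empty sums are $0$. *)

theory Defs
  imports "HOL-Analysis.Analysis"
begin

definition shH :: "real \<Rightarrow> real" where
  "shH a = (\<Sum>k. 1 / real (Suc k) - 1 / (real (Suc k) + a))"

definition shHm :: "nat \<Rightarrow> real \<Rightarrow> real" where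
  "shHm m a = (\<Sum>k. 1 / real (Suc k) ^ m - 1 / (real (Suc k) + a) ^ m)"

definition Cfun :: "real \<Rightarrow> real" where
  "Cfun b = shH b ^ 3 + 3 * shH b * shHm 2 b + 2 * shHm 3 b"

definition Qfun :: "real \<Rightarrow> real" where
  "Qfun b = shH b ^ 4 + 6 * shH b ^ 2 * shHm 2 b + 8 * shH b * shHm 3 b
            + 3 * (shHm 2 b) ^ 2 + 6 * shHm 4 b"

end

theory Submission imports Defs "HOL-Real_Asymp.Real_Asymp" begin

definition yv :: "real \<Rightarrow> nat \<Rightarrow> nat \<Rightarrow> real" where
  "yv g m i = 1 / (g + real m + real i)"

fun gg :: "real \<Rightarrow> nat \<Rightarrow> nat \<Rightarrow> nat \<Rightarrow> real" where
  "gg g m 0 n = 1"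
| "gg g m (Suc e) 0 = 0"
| "gg g m (Suc e) (Suc n) = gg g m (Suc e) n + yv g m (Suc n) * gg g m e (Suc n)"

definition rho :: "real \<Rightarrow> nat \<Rightarrow> nat \<Rightarrow> real" where
  "rho g m n = (\<Prod>i=1..n. (g + real i - 1) / (g + real m + real i))"

definition UU :: "real \<Rightarrow> nat \<Rightarrow> nat \<Rightarrow> nat \<Rightarrow> real" where
  "UU g m e n = rho g m n * gg g m e n"

definition VV :: "real \<Rightarrow> nat \<Rightarrow> nat \<Rightarrow> nat \<Rightarrow> real" where
  "VV g m e n = rho g m n * yv g m (Suc n) * gg g m e (Suc n)"

lemma rho_0 [simp]: "rho g m 0 = 1" by (simp add: rho_def)

lemma rho_Suc: "rho g m (Suc n) = rho g m n * ((g + real n) / (g + real m + real (Suc n)))"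
  by (simp add: rho_def)

lemma rho_shift: assumes "g > 0"
  shows "rho g (Suc m) n = rho g m n * ((g + real m + 1) / (g + real m + real n + 1))"
proof (induction n)
  case 0 then show ?case using assms by simp
next
  case (Suc n)
  have p: "g + real m + real n + 1 \<noteq> 0" "g + real m + real n + 2 \<noteq> 0" using assms by (auto simp: add_pos_nonneg)
  have "rho g (Suc m) (Suc n) = rho g (Suc m) n * ((g + real n) / (g + real (Suc m) + real (Suc n)))"
    by (rule rho_Suc)
  also have "\<dots> = rho g m n * ((g + real m + 1) / (g + real m + real n + 1)) * ((g + real n) / (g + real m + real n + 2))"
    using Suc by simp
  also have "\<dots> = rho g m n * ((g + real n) / (g + real m + real n + 1)) * ((g + real m + 1) / (g + real m + real n + 2))"
    by simp
  also have "\<dots> = rho g m (Suc n) * ((g + real m + 1) / (g + real m + real (Suc n) + 1))"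
    by (simp add: rho_Suc add_ac)
  finally show ?case .
qed

lemma yv_shift: "yv g (Suc m) i = yv g m (Suc i)"
  by (simp add: yv_def add_ac)

lemma gg_removal:
  "gg g m (Suc e) (Suc n) = gg g (Suc m) (Suc e) n + yv g m 1 * gg g m e (Suc n)"
proof (induction n arbitrary: e)
  case 0 then show ?case by simp
next
  case (Suc n)
  note outer = Suc.IH
  show ?case
  proof (induction e)
    case 0
    have "gg g m (Suc 0) (Suc (Suc n)) = gg g m (Suc 0) (Suc n) + yv g m (Suc (Suc n))" by simp
    also have "\<dots> = gg g (Suc m) (Suc 0) n + yv g m 1 + yv g m (Suc (Suc n))"
      using outer[of 0] by simp
    also have "\<dots> = gg g (Suc m) (Suc 0) (Suc n) + yv g m 1 * gg g m 0 (Suc (Suc n))"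
      by (simp add: yv_shift)
    finally show ?case .
  next
    case (Suc e)
    let ?Y = "yv g m (Suc (Suc n))" and ?y1 = "yv g m 1"
    have d1: "gg g m (Suc (Suc e)) (Suc (Suc n)) = gg g m (Suc (Suc e)) (Suc n) + ?Y * gg g m (Suc e) (Suc (Suc n))"
      by simp
    have d2: "gg g (Suc m) (Suc (Suc e)) (Suc n) = gg g (Suc m) (Suc (Suc e)) n + ?Y * gg g (Suc m) (Suc e) (Suc n)"
      by (simp add: yv_shift)
    have d3: "gg g m (Suc e) (Suc (Suc n)) = gg g m (Suc e) (Suc n) + ?Y * gg g m e (Suc (Suc n))"
      by simp
    have o1: "gg g m (Suc (Suc e)) (Suc n) = gg g (Suc m) (Suc (Suc e)) n + ?y1 * gg g m (Suc e) (Suc n)"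
      using outer by blast
    have i1: "gg g m (Suc e) (Suc (Suc n)) = gg g (Suc m) (Suc e) (Suc n) + ?y1 * gg g m e (Suc (Suc n))"
      using Suc.IH .
    show ?case
      unfolding d1 d2 o1
      apply (subst (1) i1)
      apply (subst d3)
      by (simp del: gg.simps add: algebra_simps)
  qed
qed

lemma yv_mult: "g > 0 \<Longrightarrow> yv g m i * (g + real m + real i) = 1"
  unfolding yv_def by (simp add: add_pos_nonneg)

lemma id2_0: assumes "g > 0"
  shows "UU g m 0 n - UU g m 0 (Suc n) = (real m + 1) * VV g m 0 n"
proof -
  have p: "g + real m + real n + 1 \<noteq> 0" using assms by (auto simp: add_pos_nonneg)
  show ?thesis unfolding UU_def VV_def yv_def using p
    by (simp add: rho_Suc field_simps)
qed

lemma id2_Suc: assumes "g > 0"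
  shows "UU g m (Suc e) n - UU g m (Suc e) (Suc n) = (real m + 1) * VV g m (Suc e) n - VV g m e n"
proof -
  have p: "g + real m + real n + 1 \<noteq> 0" using assms by (auto simp: add_pos_nonneg)
  have r: "gg g m (Suc e) n = gg g m (Suc e) (Suc n) - yv g m (Suc n) * gg g m e (Suc n)" by simp
  show ?thesis unfolding UU_def VV_def r
    unfolding yv_def using p
    by (simp add: rho_Suc field_simps del: gg.simps)
qed

lemma id1_0: assumes "g > 0"
  shows "UU g m 0 n - UU g (Suc m) 0 n = real n * VV g m 0 n"
proof -
  have p: "g + real m + real n + 1 \<noteq> 0" using assms by (auto simp: add_pos_nonneg)
  show ?thesis unfolding UU_def VV_def yv_def using p
    by (simp add: rho_shift[OF assms] field_simps)
qed

lemma id1_Suc: assumes "g > 0"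
  shows "UU g m (Suc e) n - UU g (Suc m) (Suc e) n = real n * VV g m (Suc e) n"
proof (cases n)
  case 0 then show ?thesis by (simp add: UU_def VV_def)
next
  case (Suc k)
  have p: "g + real m + real k + 2 \<noteq> 0" "g + real m + 1 \<noteq> 0" using assms by (auto simp: add_pos_nonneg)
  let ?G1 = "gg g m (Suc e) (Suc (Suc k))" and ?G0 = "gg g m e (Suc (Suc k))"
  have a: "gg g m (Suc e) (Suc k) = ?G1 - yv g m (Suc (Suc k)) * ?G0" by simp
  have b: "gg g (Suc m) (Suc e) (Suc k) = ?G1 - yv g m 1 * ?G0" using gg_removal[of g m e "Suc k"] by simp
  define Y where "Y = yv g m (Suc (Suc k))"
  define y1 where "y1 = yv g m 1"
  define R where "R = rho g m (Suc k)"
  have Y1: "Y * (g + real m + real k + 2) = 1" using yv_mult[OF assms, of m "Suc (Suc k)"] by (simp add: Y_def add_ac)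
  have y11: "y1 * (g + real m + 1) = 1" using yv_mult[OF assms, of m 1] by (simp add: y1_def add_ac)
  have rs: "rho g (Suc m) (Suc k) = R * (g + real m + 1) * Y"
  proof -
    have Ye: "Y = 1 / (g + real m + real k + 2)" by (simp add: Y_def yv_def algebra_simps)
    show ?thesis using rho_shift[OF assms, of m "Suc k"] unfolding R_def Ye
      by (simp add: algebra_simps add_divide_distrib)
  qed
  have "UU g m (Suc e) n - UU g (Suc m) (Suc e) n = R * (?G1 - Y * ?G0) - R * (g + real m + 1) * Y * (?G1 - y1 * ?G0)"
    unfolding UU_def Suc a b rs by (simp add: R_def Y_def y1_def del: gg.simps)
  also have "\<dots> = R * ?G1 * (1 - (g + real m + 1) * Y) - R * Y * ?G0 * (1 - y1 * (g + real m + 1))"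
    by (simp add: algebra_simps)
  also have "\<dots> = R * ?G1 * ((real k + 1) * Y)"
  proof -
    have "1 - (g + real m + 1) * Y = (real k + 1) * Y" using Y1 by (simp add: algebra_simps)
    moreover have "1 - y1 * (g + real m + 1) = 0" using y11 by simp
    ultimately show ?thesis by simp
  qed
  also have "\<dots> = real n * VV g m (Suc e) n"
    unfolding VV_def Suc R_def Y_def by simp
  finally show ?thesis .
qed

section \<open>Nonnegativity and bounds\<close>

lemma yv_pos: "g > 0 \<Longrightarrow> yv g m i > 0"
  unfolding yv_def by (simp add: add_pos_nonneg)

lemma gg_nonneg: "g > 0 \<Longrightarrow> gg g m e n \<ge> 0"
proof (induction e arbitrary: n)
  case 0 then show ?case by simp
next
  case (Suc e)
  note outer = Suc.IH
  show ?case
  proof (induction n)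
    case 0 then show ?case by simp
  next
    case (Suc n)
    then show ?case using Suc.IH yv_pos[OF \<open>g > 0\<close>, of m "Suc n"] outer[OF \<open>g > 0\<close>, of "Suc n"]
      by simp
  qed
qed

lemma rho_nonneg: "g > 0 \<Longrightarrow> rho g m n \<ge> 0"
  unfolding rho_def by (intro prod_nonneg) (auto intro!: divide_nonneg_pos add_pos_nonneg)

lemma UU_nonneg: "g > 0 \<Longrightarrow> UU g m e n \<ge> 0"
  unfolding UU_def using gg_nonneg rho_nonneg by simp

lemma VV_nonneg: "g > 0 \<Longrightarrow> VV g m e n \<ge> 0"
  unfolding VV_def using gg_nonneg rho_nonneg yv_pos by (simp add: less_imp_le)

definition sv :: "real \<Rightarrow> nat \<Rightarrow> nat \<Rightarrow> real" where
  "sv g m n = (\<Sum>i=1..n. yv g m i)"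

lemma sv_Suc: "sv g m (Suc n) = sv g m n + yv g m (Suc n)"
  by (simp add: sv_def)

lemma sv_nonneg: "g > 0 \<Longrightarrow> sv g m n \<ge> 0"
  unfolding sv_def using yv_pos by (simp add: less_imp_le sum_nonneg)

lemma gg_le_sv: assumes "g > 0" shows "gg g m e n \<le> sv g m n ^ e"
proof (induction e arbitrary: n)
  case 0 then show ?case by simp
next
  case (Suc e)
  show ?case
  proof (induction n)
    case 0 then show ?case by (simp add: sv_def)
  next
    case (Suc n)
    have y: "yv g m (Suc n) > 0" using yv_pos[OF assms] .
    have s0: "sv g m n \<ge> 0" using sv_nonneg[OF assms] .
    have "gg g m (Suc e) (Suc n) = gg g m (Suc e) n + yv g m (Suc n) * gg g m e (Suc n)" by simp
    also have "\<dots> \<le> sv g m n ^ Suc e + yv g m (Suc n) * sv g m (Suc n) ^ e"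
      using Suc.IH \<open>\<And>n. gg g m e n \<le> sv g m n ^ e\<close>[of "Suc n"] y
      by (intro add_mono mult_left_mono) auto
    also have "\<dots> \<le> sv g m (Suc n) ^ e * sv g m n + yv g m (Suc n) * sv g m (Suc n) ^ e"
    proof -
      have "sv g m n ^ e \<le> sv g m (Suc n) ^ e"
        using s0 y by (intro power_mono) (auto simp: sv_Suc)
      then show ?thesis using s0 by (simp add: mult_left_mono mult.commute)
    qed
    also have "\<dots> = sv g m (Suc n) ^ Suc e" by (simp add: sv_Suc algebra_simps)
    finally show ?case .
  qed
qed

lemma sv_le_harm: assumes "g > 0" shows "sv g m n \<le> harm n"
  unfolding sv_def harm_def
proof (intro sum_mono)
  fix i assume "i \<in> {1..n}"
  then have i: "real i \<ge> 1" by auto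
  have "1 / (g + real m + real i) \<le> 1 / real i"
    using i assms by (intro divide_left_mono) (auto simp: add_pos_nonneg)
  then show "yv g m i \<le> inverse (real i)" by (simp add: yv_def inverse_eq_divide)
qed

lemma harm_le_ln: assumes "n \<ge> 1" shows "harm n \<le> 1 + ln (real n)"
proof -
  have "harm (Suc 0) = (1::real)" by (simp add: harm_def)
  then show ?thesis using euler_mascheroni_sequence_decreasing[of 1 n] assms by simp
qed

lemma rho_le1: assumes "g > 0" shows "rho g m n \<le> g / (g + real n)"
proof (induction n)
  case 0 then show ?case using assms by simp
next
  case (Suc n)
  have p: "g + real n > 0" using assms by simp
  have "rho g m (Suc n) = rho g m n * ((g + real n) / (g + real m + real (Suc n)))" by (rule rho_Suc)
  also have "\<dots> \<le> g / (g + real n) * ((g + real n) / (g + real (Suc n)))"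
    using Suc rho_nonneg[OF assms] p assms
    by (intro mult_mono divide_left_mono) (auto simp: add_pos_nonneg)
  also have "\<dots> = g / (g + real (Suc n))" using p by simp
  finally show ?case .
qed

lemma rho_le2: assumes "g > 0" "n \<ge> 1" shows "rho g m n \<le> g / (g + real m + 1)"
  using assms(2)
proof (induction n rule: dec_induct)
  case base then show ?case by (simp add: rho_def add_ac)
next
  case (step n)
  have "rho g m (Suc n) = rho g m n * ((g + real n) / (g + real m + real (Suc n)))" by (rule rho_Suc)
  also have "\<dots> \<le> rho g m n * 1"
    using rho_nonneg[OF assms(1)] assms(1)
    by (intro mult_left_mono) (auto simp: field_simps add_pos_nonneg)
  finally show ?case using step by simp
qed

lemma UU_tendsto_N: assumes "g > 0" "e \<le> 3"
  shows "(\<lambda>N. UU g m e N) \<longlonglongrightarrow> 0"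
proof (rule tendsto_sandwich[of "\<lambda>_. 0" _ _ "\<lambda>N. g * ((1 + ln (real N)) ^ 3 / real N)"])
  show "\<forall>\<^sub>F N in sequentially. 0 \<le> UU g m e N" using UU_nonneg[OF assms(1)] by simp
  show "\<forall>\<^sub>F N in sequentially. UU g m e N \<le> g * ((1 + ln (real N)) ^ 3 / real N)"
  proof (rule eventually_sequentiallyI[of 1])
    fix N :: nat assume N: "N \<ge> 1"
    have l0: "0 \<le> ln (real N)" using N by simp
    have h: "sv g m N \<le> 1 + ln (real N)" using sv_le_harm[OF assms(1), of m N] harm_le_ln[OF N] by linarith
    have "gg g m e N \<le> sv g m N ^ e" by (rule gg_le_sv[OF assms(1)])
    also have "\<dots> \<le> (1 + ln (real N)) ^ e" using h sv_nonneg[OF assms(1)] by (intro power_mono) auto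
    also have "\<dots> \<le> (1 + ln (real N)) ^ 3" using l0 assms(2) by (intro power_increasing) auto
    finally have gb: "gg g m e N \<le> (1 + ln (real N)) ^ 3" .
    have "UU g m e N \<le> g / (g + real N) * (1 + ln (real N)) ^ 3"
      unfolding UU_def using rho_le1[OF assms(1)] gb gg_nonneg[OF assms(1)] assms(1)
      by (intro mult_mono) auto
    also have "\<dots> \<le> g / real N * (1 + ln (real N)) ^ 3"
      using N assms(1) l0 by (intro mult_right_mono divide_left_mono) auto
    finally show "UU g m e N \<le> g * ((1 + ln (real N)) ^ 3 / real N)" by simp
  qed
  have "(\<lambda>N. (1 + ln (real N)) ^ 3 / real N) \<longlonglongrightarrow> 0" by real_asymp
  then show "(\<lambda>N. g * ((1 + ln (real N)) ^ 3 / real N)) \<longlonglongrightarrow> 0"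
    using tendsto_mult_right_zero by blast
qed simp

lemma UU_tendsto_m: assumes "g > 0" "n \<ge> 1"
  shows "(\<lambda>J. UU g (m + J) e n) \<longlonglongrightarrow> 0"
proof (rule tendsto_sandwich[of "\<lambda>_. 0" _ _ "\<lambda>J. g / (g + real m + real J + 1) * harm n ^ e"])
  show "\<forall>\<^sub>F J in sequentially. 0 \<le> UU g (m + J) e n" using UU_nonneg[OF assms(1)] by simp
  show "\<forall>\<^sub>F J in sequentially. UU g (m + J) e n \<le> g / (g + real m + real J + 1) * harm n ^ e"
  proof (intro always_eventually allI)
    fix J
    have "gg g (m+J) e n \<le> harm n ^ e"
      using gg_le_sv[OF assms(1)] sv_le_harm[OF assms(1)] sv_nonneg[OF assms(1)]
      by (meson order_trans power_mono)
    then show "UU g (m + J) e n \<le> g / (g + real m + real J + 1) * harm n ^ e"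
      unfolding UU_def using rho_le2[OF assms, of "m+J"] rho_nonneg[OF assms(1)] gg_nonneg[OF assms(1)] assms(1)
      by (intro mult_mono) (auto simp: add_ac)
  qed
  show "(\<lambda>J. g / (g + real m + real J + 1) * harm n ^ e) \<longlonglongrightarrow> 0"
    using assms(1) by real_asymp
qed simp

section \<open>Telescoping in n\<close>

definition Dd :: "real \<Rightarrow> nat \<Rightarrow> nat \<Rightarrow> real" where
  "Dd g m e = (1 / (real m + 1)) ^ Suc e - (1 / (g + real m + 1)) ^ Suc e"

lemma gg_1: "gg g m e 1 = yv g m 1 ^ e"
  by (induction e) auto

lemma UU_1: "UU g m e 1 = g * (1 / (g + real m + 1)) ^ Suc e"
  unfolding UU_def gg_1 by (simp add: rho_def yv_def add_ac)

lemma Dd_0: assumes "g > 0" shows "Dd g m 0 = UU g m 0 1 / (real m + 1)"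
proof -
  have p: "g + real m + 1 > 0" "real m + 1 > 0" using assms by auto
  show ?thesis unfolding Dd_def UU_1 using p by (simp add: field_simps)
qed

lemma Dd_Suc: assumes "g > 0" shows "Dd g m (Suc e) = (Dd g m e + UU g m (Suc e) 1) / (real m + 1)"
proof -
  define y where "y = 1 / (g + real m + 1)"
  define k where "k = 1 / (real m + 1)"
  have p: "g + real m + 1 > 0" "real m + 1 > 0" using assms by auto
  have yk: "y * (g + real m + 1) = 1" "k * (real m + 1) = 1" using p by (auto simp: y_def k_def)
  have "Dd g m (Suc e) * (real m + 1) = Dd g m e + UU g m (Suc e) 1"
  proof -
    have "Dd g m (Suc e) * (real m + 1) = k ^ Suc e * (k * (real m + 1)) - y ^ Suc e * (y * (real m + 1))"
      unfolding Dd_def k_def[symmetric] y_def[symmetric] by (simp add: algebra_simps)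
    also have "\<dots> = k ^ Suc e - y ^ Suc e * (1 - y * g)"
    proof -
      have "y * (real m + 1) = 1 - y * g" using yk(1) by (simp add: algebra_simps)
      then show ?thesis using yk(2) by simp
    qed
    also have "\<dots> = Dd g m e + UU g m (Suc e) 1"
      unfolding Dd_def UU_1 k_def[symmetric] y_def[symmetric] by (simp add: algebra_simps)
    finally show ?thesis .
  qed
  then show ?thesis using p by (simp add: field_simps)
qed

lemma VV_partial:
  assumes "g > 0" "e \<le> 3"
  shows "(\<lambda>N. \<Sum>n<N. VV g m e (Suc n)) \<longlonglongrightarrow> Dd g m e \<and> (\<forall>N. (\<Sum>n<N. VV g m e (Suc n)) \<le> Dd g m e)"
  using assms(2)
proof (induction e)
  case 0
  have eq: "(\<Sum>n<N. VV g m 0 (Suc n)) = (UU g m 0 1 - UU g m 0 (Suc N)) / (real m + 1)" for N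
  proof -
    have "(real m + 1) * (\<Sum>n<N. VV g m 0 (Suc n)) = (\<Sum>n<N. (real m + 1) * VV g m 0 (Suc n))"
      by (simp add: sum_distrib_left)
    also have "\<dots> = (\<Sum>n<N. UU g m 0 (Suc n) - UU g m 0 (Suc (Suc n)))"
      using id2_0[OF assms(1)] by simp
    also have "\<dots> = UU g m 0 1 - UU g m 0 (Suc N)" using sum_lessThan_telescope'[where f="\<lambda>n. UU g m 0 (Suc n)"] by simp
    finally show ?thesis by (simp add: field_simps)
  qed
  have "(\<lambda>N. (UU g m 0 1 - UU g m 0 (Suc N)) / (real m + 1)) \<longlonglongrightarrow> (UU g m 0 1 - 0) / (real m + 1)"
    using UU_tendsto_N[OF assms(1), of 0 m]
    by (intro tendsto_intros) (auto simp: LIMSEQ_Suc)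
  moreover have "(UU g m 0 1 - UU g m 0 (Suc N)) / (real m + 1) \<le> UU g m 0 1 / (real m + 1)" for N
    using UU_nonneg[OF assms(1)] by (simp add: divide_right_mono)
  ultimately show ?case unfolding eq Dd_0[OF assms(1)] by simp
next
  case (Suc e)
  then have IH: "(\<lambda>N. \<Sum>n<N. VV g m e (Suc n)) \<longlonglongrightarrow> Dd g m e" "\<And>N. (\<Sum>n<N. VV g m e (Suc n)) \<le> Dd g m e"
    by auto
  have eq: "(\<Sum>n<N. VV g m (Suc e) (Suc n)) = ((\<Sum>n<N. VV g m e (Suc n)) + UU g m (Suc e) 1 - UU g m (Suc e) (Suc N)) / (real m + 1)" for N
  proof -
    have "(real m + 1) * (\<Sum>n<N. VV g m (Suc e) (Suc n)) - (\<Sum>n<N. VV g m e (Suc n)) = (\<Sum>n<N. (real m + 1) * VV g m (Suc e) (Suc n) - VV g m e (Suc n))"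
      by (simp add: sum_distrib_left sum_subtractf)
    also have "\<dots> = (\<Sum>n<N. UU g m (Suc e) (Suc n) - UU g m (Suc e) (Suc (Suc n)))"
      using id2_Suc[OF assms(1)] by simp
    also have "\<dots> = UU g m (Suc e) 1 - UU g m (Suc e) (Suc N)" using sum_lessThan_telescope'[where f="\<lambda>n. UU g m (Suc e) (Suc n)"] by simp
    finally show ?thesis by (simp add: field_simps)
  qed
  have "(\<lambda>N. ((\<Sum>n<N. VV g m e (Suc n)) + UU g m (Suc e) 1 - UU g m (Suc e) (Suc N)) / (real m + 1))
        \<longlonglongrightarrow> (Dd g m e + UU g m (Suc e) 1 - 0) / (real m + 1)"
    using UU_tendsto_N[OF assms(1), of "Suc e" m] Suc.prems IH(1)
    by (intro tendsto_intros) (auto simp: LIMSEQ_Suc)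
  moreover have "((\<Sum>n<N. VV g m e (Suc n)) + UU g m (Suc e) 1 - UU g m (Suc e) (Suc N)) / (real m + 1)
       \<le> (Dd g m e + UU g m (Suc e) 1) / (real m + 1)" for N
    using UU_nonneg[OF assms(1), of m "Suc e" "Suc N"] IH(2)[of N] by (intro divide_right_mono) auto
  ultimately show ?case unfolding eq Dd_Suc[OF assms(1)] by simp
qed

section \<open>Telescoping in m\<close>

definition ff :: "real \<Rightarrow> nat \<Rightarrow> nat \<Rightarrow> nat \<Rightarrow> real" where
  "ff g m e n = UU g m e (Suc n) / real (Suc n)"

lemma ff_diff: assumes "g > 0" shows "ff g m e n - ff g (Suc m) e n = VV g m e (Suc n)"
proof -
  have "UU g m e (Suc n) - UU g (Suc m) e (Suc n) = real (Suc n) * VV g m e (Suc n)"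
    using id1_0[OF assms] id1_Suc[OF assms] by (cases e) auto
  then show ?thesis unfolding ff_def by (simp add: field_simps diff_divide_distrib[symmetric])
qed

lemma ff_nonneg: "g > 0 \<Longrightarrow> ff g m e n \<ge> 0"
  unfolding ff_def using UU_nonneg by simp

lemma pow_diff_le: fixes u v :: real assumes "0 \<le> v" "v \<le> u"
  shows "u ^ k - v ^ k \<le> real k * u ^ (k - 1) * (u - v)"
proof (induction k)
  case 0 then show ?case by simp
next
  case (Suc k)
  have "u ^ Suc k - v ^ Suc k = u * (u ^ k - v ^ k) + v ^ k * (u - v)" by (simp add: algebra_simps)
  also have "\<dots> \<le> u * (real k * u ^ (k - 1) * (u - v)) + u ^ k * (u - v)"
    using Suc assms by (intro add_mono mult_left_mono mult_right_mono power_mono) auto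
  also have "\<dots> = real (Suc k) * u ^ k * (u - v)"
    by (cases k) (auto simp: algebra_simps)
  finally show ?case by simp
qed

lemma Dd_nonneg: assumes "g > 0" shows "Dd g m e \<ge> 0"
proof -
  have "1 / (g + real m + 1) \<le> 1 / (real m + 1)" using assms by (intro divide_left_mono) auto
  then have "(1 / (g + real m + 1)) ^ Suc e \<le> (1 / (real m + 1)) ^ Suc e"
    using assms by (intro power_mono) (auto simp: add_pos_nonneg)
  then show ?thesis unfolding Dd_def by simp
qed

lemma Dd_le: assumes "g > 0" shows "Dd g m e \<le> real (Suc e) * g / (real m + 1) ^ 2"
proof -
  define u where "u = 1 / (real m + 1)"
  define v where "v = 1 / (g + real m + 1)"
  have v0: "0 \<le> v" "v \<le> u" using assms by (auto simp: u_def v_def intro!: divide_left_mono add_pos_nonneg)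
  have u1: "u \<le> 1" "0 \<le> u" by (auto simp: u_def)
  have "Dd g m e \<le> real (Suc e) * u ^ e * (u - v)" unfolding Dd_def u_def[symmetric] v_def[symmetric]
    using pow_diff_le[OF v0, of "Suc e"] by simp
  also have "\<dots> \<le> real (Suc e) * 1 * (u - v)"
    using u1 v0 by (intro mult_right_mono mult_left_mono power_le_one) auto
  also have "u - v = g / ((real m + 1) * (g + real m + 1))"
    using assms by (simp add: u_def v_def field_simps)
  also have "\<dots> \<le> g / (real m + 1) ^ 2"
    using assms by (intro divide_left_mono) (auto simp: power2_eq_square intro!: mult_left_mono)
  finally show ?thesis by (simp add: mult_left_mono)
qed

lemma Dd_summable: assumes "g > 0" shows "summable (\<lambda>m. Dd g m e)"
proof (rule summable_comparison_test')
  have "summable (\<lambda>n. 1 / (real n + 1)^2)" using inverse_squares_sums by (simp add: sums_iff add_ac)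
  then show "summable (\<lambda>m. real (Suc e) * g * (1 / (real m + 1) ^ 2))" by (intro summable_mult)
  fix n :: nat assume "n \<ge> 0"
  show "norm (Dd g n e) \<le> real (Suc e) * g * (1 / (real n + 1) ^ 2)"
    using Dd_le[OF assms, of n e] Dd_nonneg[OF assms, of n e] by simp
qed

lemma tail_tendsto: fixes a :: "nat \<Rightarrow> real" assumes "summable a"
  shows "(\<lambda>J. \<Sum>j. a (j + J)) \<longlonglongrightarrow> 0"
proof -
  have "(\<lambda>J. suminf a - (\<Sum>i<J. a i)) \<longlonglongrightarrow> suminf a - suminf a"
    using assms by (intro tendsto_intros summable_LIMSEQ)
  then show ?thesis using suminf_minus_initial_segment[OF assms] by simp
qed

lemma main_sums:
  assumes "g > 0" "e \<le> 3"
  shows "ff g m e sums (\<Sum>j. Dd g (m + j) e)"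
proof -
  define Z where "Z m = (\<Sum>j. Dd g (m + j) e)" for m
  have sumD: "summable (\<lambda>j. Dd g (m + j) e)" for m
    using Dd_summable[OF assms(1), of e] summable_iff_shift[of "\<lambda>j. Dd g j e" m] by (simp add: add_ac)
  have Z0: "Z m \<ge> 0" for m unfolding Z_def using sumD by (intro suminf_nonneg Dd_nonneg assms)
  have Ztend: "(\<lambda>J. Z (m + J)) \<longlonglongrightarrow> 0" for m
    using tail_tendsto[OF sumD[of m]] unfolding Z_def by (simp add: add_ac)
  define P where "P m N = (\<Sum>n<N. ff g m e n)" for m N
  have Pstep: "P m N \<le> Dd g m e + P (Suc m) N" for m N
  proof -
    have "P m N - P (Suc m) N = (\<Sum>n<N. VV g m e (Suc n))"
      unfolding P_def using ff_diff[OF assms(1)] by (simp add: sum_subtractf[symmetric])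
    moreover have "(\<Sum>n<N. VV g m e (Suc n)) \<le> Dd g m e" using VV_partial[OF assms, of m] by blast
    ultimately show ?thesis by linarith
  qed
  have PJ: "P m N \<le> (\<Sum>j<J. Dd g (m + j) e) + P (m + J) N" for m N J
  proof (induction J)
    case 0 then show ?case by simp
  next
    case (Suc J) then show ?case using Pstep[of "m + J" N] by simp
  qed
  have Ptend: "(\<lambda>J. P (m + J) N) \<longlonglongrightarrow> 0" for m N
  proof -
    have "(\<lambda>J. \<Sum>n<N. ff g (m + J) e n) \<longlonglongrightarrow> (\<Sum>n<N. 0)"
    proof (intro tendsto_sum)
      fix n
      show "(\<lambda>J. ff g (m + J) e n) \<longlonglongrightarrow> 0"
        unfolding ff_def using UU_tendsto_m[OF assms(1), of "Suc n" m e]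
        by (auto intro: tendsto_divide_zero)
    qed
    then show ?thesis by (simp add: P_def)
  qed
  have Pbound: "P m N \<le> Z m" for m N
  proof -
    have lim: "(\<lambda>J. Z m + P (m + J) N) \<longlonglongrightarrow> Z m"
      using tendsto_add[OF tendsto_const Ptend[of m N], of "Z m"] by (simp only: add_0_right)
    have "\<exists>K. \<forall>J\<ge>K. P m N \<le> Z m + P (m + J) N"
    proof (intro exI allI impI)
      fix J
      have "(\<Sum>j<J. Dd g (m + j) e) \<le> Z m"
        unfolding Z_def by (intro sum_le_suminf sumD Dd_nonneg[OF assms(1)] finite_lessThan)
      then show "P m N \<le> Z m + P (m + J) N" using PJ[of m N J] by linarith
    qed
    then show ?thesis by (rule LIMSEQ_le_const[OF lim])
  qed
  have summ: "summable (ff g m e)" for m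
    using Pbound ff_nonneg[OF assms(1)] unfolding P_def
    by (intro summableI_nonneg_bounded[of _ "Z m"]) auto
  define F where "F m = suminf (ff g m e)" for m
  have Fdiff: "F m - F (Suc m) = Dd g m e" for m
  proof -
    have "(\<lambda>n. ff g m e n - ff g (Suc m) e n) sums (F m - F (Suc m))"
      unfolding F_def using summ by (intro sums_diff summable_sums)
    moreover have "(\<lambda>n. ff g m e n - ff g (Suc m) e n) sums Dd g m e"
      unfolding ff_diff[OF assms(1)] sums_def using VV_partial[OF assms, of m] by simp
    ultimately show ?thesis using sums_unique2 by blast
  qed
  have FJ: "F m = (\<Sum>j<J. Dd g (m + j) e) + F (m + J)" for J
  proof (induction J)
    case 0 then show ?case by simp
  next
    case (Suc J) then show ?case using Fdiff[of "m + J"] by simp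
  qed
  have Fle: "0 \<le> F k \<and> F k \<le> Z k" for k
  proof
    show "0 \<le> F k" unfolding F_def using summ ff_nonneg[OF assms(1)] by (intro suminf_nonneg) auto
    have "(\<lambda>N. P k N) \<longlonglongrightarrow> F k" unfolding P_def F_def using summ summable_LIMSEQ by blast
    then show "F k \<le> Z k" using Pbound by (intro LIMSEQ_le_const2) auto
  qed
  have "(\<lambda>J. F (m + J)) \<longlonglongrightarrow> 0"
  proof (rule tendsto_sandwich[of "\<lambda>_. 0" _ _ "\<lambda>J. Z (m + J)"])
    show "\<forall>\<^sub>F J in sequentially. 0 \<le> F (m + J)" using Fle by simp
    show "\<forall>\<^sub>F J in sequentially. F (m + J) \<le> Z (m + J)" using Fle by simp
    show "(\<lambda>J. Z (m + J)) \<longlonglongrightarrow> 0" by (rule Ztend)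
  qed simp
  then have "(\<lambda>J. F m - F (m + J)) \<longlonglongrightarrow> F m - 0" by (intro tendsto_intros)
  moreover have "F m - F (m + J) = (\<Sum>j<J. Dd g (m + j) e)" for J using FJ[of J] by linarith
  ultimately have "(\<lambda>J. \<Sum>j<J. Dd g (m + j) e) \<longlonglongrightarrow> F m" by simp
  moreover have "(\<lambda>J. \<Sum>j<J. Dd g (m + j) e) \<longlonglongrightarrow> Z m" unfolding Z_def using sumD summable_LIMSEQ by blast
  ultimately have "F m = Z m" using LIMSEQ_unique by blast
  then show ?thesis using summable_sums[OF summ[of m]] unfolding F_def Z_def by simp
qed

lemma rho_0m: assumes "g > 0" shows "rho g 0 n = g / (g + real n)"
proof (induction n)
  case 0 then show ?case using assms by simp
next
  case (Suc n)
  have p: "g + real n > 0" "g + real n + 1 > 0" using assms by auto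
  have "rho g 0 (Suc n) = g / (g + real n) * ((g + real n) / (g + real n + 1))"
    unfolding rho_Suc Suc by (simp add: add_ac)
  also have "\<dots> = g / (g + real n + 1)" using p by simp
  finally show ?case by (simp add: add_ac)
qed

lemma ff_0m: assumes "g > 0"
  shows "ff g 0 e n = g / (real (Suc n) * (g + real (Suc n))) * gg g 0 e (Suc n)"
  unfolding ff_def UU_def rho_0m[OF assms] by (simp add: field_simps)

lemma Dd_shHm: "shHm (Suc e) a = (\<Sum>k. Dd a k e)"
  unfolding shHm_def Dd_def by (simp add: power_one_over add_ac)

lemma shH_shHm1: "shH a = shHm 1 a"
  unfolding shH_def shHm_def by simp

lemma ff_sums_shHm: assumes "g > 0" "e \<le> 3" shows "ff g 0 e sums shHm (Suc e) g"
  using main_sums[OF assms, of 0] unfolding Dd_shHm by simp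

lemma shHm_step: assumes "a > 0"
  shows "shHm (Suc e) (a + 1) = shHm (Suc e) a + (1 / (a + 1)) ^ Suc e"
proof -
  define h where "h k = (1 / (real k + 1 + a)) ^ (Suc e)" for k :: nat
  have "h \<longlonglongrightarrow> 0"
    unfolding h_def using assms by real_asymp
  then have t: "(\<lambda>k. h (Suc k) - h k) sums (0 - h 0)" using telescope_sums by fastforce
  have "(\<lambda>k. Dd a k e - Dd (a + 1) k e) sums (shHm (Suc e) a - shHm (Suc e) (a + 1))"
    unfolding Dd_shHm using Dd_summable[of a e] Dd_summable[of "a + 1" e] assms
    by (intro sums_diff summable_sums) auto
  moreover have "(\<lambda>k. Dd a k e - Dd (a + 1) k e) = (\<lambda>k. h (Suc k) - h k)"
    by (rule ext) (simp add: Dd_def h_def algebra_simps)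
  ultimately have "shHm (Suc e) a - shHm (Suc e) (a + 1) = 0 - h 0"
    using t sums_unique2 by metis
  then show ?thesis by (simp add: h_def add_ac)
qed

definition sp :: "real \<Rightarrow> nat \<Rightarrow> nat \<Rightarrow> real" where
  "sp g j n = (\<Sum>i=1..n. yv g 0 i ^ j)"

lemma sp_Suc: "sp g j (Suc n) = sp g j n + yv g 0 (Suc n) ^ j"
  by (simp add: sp_def)

lemma shHm_shift: assumes "g > 0"
  shows "shHm (Suc e) (g + real n) = shHm (Suc e) g + sp g (Suc e) n"
proof (induction n)
  case 0 then show ?case by (simp add: sp_def)
next
  case (Suc n)
  have "shHm (Suc e) (g + real (Suc n)) = shHm (Suc e) ((g + real n) + 1)" by (simp add: add_ac)
  also have "\<dots> = shHm (Suc e) (g + real n) + (1 / (g + real n + 1)) ^ Suc e"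
    using assms by (intro shHm_step) auto
  finally show ?case using Suc by (simp add: sp_Suc yv_def add_ac)
qed

lemma gg1: "gg g 0 (Suc 0) n = sp g (Suc 0) n"
  by (induction n) (auto simp: sp_Suc sp_def)

lemma gg2: "gg g 0 2 n = (sp g 1 n ^ 2 + sp g 2 n) / 2"
proof (induction n)
  case 0 then show ?case by (simp add: sp_def numeral_2_eq_2)
next
  case (Suc n)
  have "gg g 0 2 (Suc n) = gg g 0 2 n + yv g 0 (Suc n) * gg g 0 1 (Suc n)"
    by (simp add: numeral_2_eq_2)
  then show ?case using Suc by (simp add: gg1 sp_Suc algebra_simps power2_eq_square)
qed

lemma gg3: "gg g 0 3 n = (sp g 1 n ^ 3 + 3 * sp g 1 n * sp g 2 n + 2 * sp g 3 n) / 6"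
proof (induction n)
  case 0 then show ?case by (simp add: sp_def numeral_3_eq_3)
next
  case (Suc n)
  have "gg g 0 3 (Suc n) = gg g 0 3 n + yv g 0 (Suc n) * gg g 0 2 (Suc n)"
    by (simp add: numeral_3_eq_3 numeral_2_eq_2)
  then show ?case using Suc by (simp add: gg2 gg1 sp_Suc field_simps power2_eq_square power3_eq_cube)
qed

lemma key_lemma: assumes g: "g > 0"
  shows "(\<lambda>n. Cfun (g + real (Suc n)) / (real (Suc n) * (g + real (Suc n)))) sums (Qfun g / g)"
proof -
  define w where "w n = g / (real (Suc n) * (g + real (Suc n)))" for n
  define a1 where "a1 = shHm 1 g"
  define a2 where "a2 = shHm 2 g"
  define a3 where "a3 = shHm 3 g"
  define a4 where "a4 = shHm 4 g"
  have f0: "ff g 0 0 n = w n" for n unfolding ff_0m[OF g] w_def by simp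
  have f1: "ff g 0 1 n = w n * sp g 1 (Suc n)" for n unfolding ff_0m[OF g] w_def using gg1[of g "Suc n"] by simp
  have f2: "ff g 0 2 n = w n * ((sp g 1 (Suc n) ^ 2 + sp g 2 (Suc n)) / 2)" for n unfolding ff_0m[OF g] w_def gg2 by simp
  have f3: "ff g 0 3 n = w n * ((sp g 1 (Suc n) ^ 3 + 3 * sp g 1 (Suc n) * sp g 2 (Suc n) + 2 * sp g 3 (Suc n)) / 6)" for n
    unfolding ff_0m[OF g] w_def gg3 by simp
  have s1: "shH (g + real (Suc n)) = a1 + sp g 1 (Suc n)" for n
    unfolding shH_shHm1 a1_def using shHm_shift[OF g, of 0 "Suc n"] by simp
  have s2: "shHm 2 (g + real (Suc n)) = a2 + sp g 2 (Suc n)" for n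
    unfolding a2_def using shHm_shift[OF g, of 1 "Suc n"] by (simp add: numeral_2_eq_2)
  have s3: "shHm 3 (g + real (Suc n)) = a3 + sp g 3 (Suc n)" for n
    unfolding a3_def using shHm_shift[OF g, of 2 "Suc n"] by (simp add: numeral_3_eq_3)
  have s4: "shHm 4 (g + real (Suc n)) = a4 + sp g 4 (Suc n)" for n
    unfolding a4_def using shHm_shift[OF g, of 3 "Suc n"] by (simp add: numeral_3_eq_3 eval_nat_numeral)
  have Cg: "Cfun g = a1 ^ 3 + 3 * a1 * a2 + 2 * a3"
    unfolding Cfun_def a1_def a2_def a3_def shH_shHm1 ..
  have eq: "Cfun (g + real (Suc n)) * w n =
      Cfun g * ff g 0 0 n + 3 * (a1 ^ 2 + a2) * ff g 0 1 n + 6 * a1 * ff g 0 2 n + 6 * ff g 0 3 n" for n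
    unfolding f0 f1 f2 f3 Cg unfolding Cfun_def s1 s2 s3
    by (simp add: field_simps power2_eq_square power3_eq_cube)
  have S0: "ff g 0 0 sums a1" using ff_sums_shHm[OF g, of 0] by (simp add: a1_def)
  have S1: "ff g 0 1 sums a2" using ff_sums_shHm[OF g, of 1] by (simp add: a2_def numeral_2_eq_2)
  have S2: "ff g 0 2 sums a3" using ff_sums_shHm[OF g, of 2] by (simp add: a3_def numeral_3_eq_3 numeral_2_eq_2)
  have S3: "ff g 0 3 sums a4" using ff_sums_shHm[OF g, of 3] by (simp add: a4_def eval_nat_numeral)
  have "(\<lambda>n. Cfun g * ff g 0 0 n + 3 * (a1 ^ 2 + a2) * ff g 0 1 n + 6 * a1 * ff g 0 2 n + 6 * ff g 0 3 n)
     sums (Cfun g * a1 + 3 * (a1 ^ 2 + a2) * a2 + 6 * a1 * a3 + 6 * a4)"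
    by (intro sums_add sums_mult S0 S1 S2 S3)
  also have "Cfun g * a1 + 3 * (a1 ^ 2 + a2) * a2 + 6 * a1 * a3 + 6 * a4 = Qfun g"
    unfolding Cg Qfun_def a1_def a2_def a3_def a4_def shH_shHm1
    by (simp add: algebra_simps power2_eq_square power3_eq_cube eval_nat_numeral)
  finally have "(\<lambda>n. Cfun (g + real (Suc n)) * w n) sums Qfun g" unfolding eq .
  then have "(\<lambda>n. Cfun (g + real (Suc n)) * w n / g) sums (Qfun g / g)" by (rule sums_divide)
  moreover have "Cfun (g + real (Suc n)) * w n / g = Cfun (g + real (Suc n)) / (real (Suc n) * (g + real (Suc n)))" for n
    unfolding w_def using g by simp
  ultimately show ?thesis by simp
qed

lemma pf_identity:
  fixes X a K R :: real assumes "a > 0" "K > 0" "R > 0" "K - R \<noteq> 0"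
  shows "(K - a) / (K - R) * (X / (K * a)) + (a - R) / (K - R) * (X / (R * a)) = X / (R * K)"
proof -
  have 1: "(K - a) / (K * a) = 1 / a - 1 / K" using assms by (simp add: field_simps)
  have 2: "(a - R) / (R * a) = 1 / R - 1 / a" using assms by (simp add: field_simps)
  have 3: "1 / R - 1 / K = (K - R) / (R * K)" using assms by (simp add: field_simps)
  have "(K - a) / (K - R) * (X / (K * a)) + (a - R) / (K - R) * (X / (R * a))
      = X / (K - R) * ((K - a) / (K * a) + (a - R) / (R * a))"
    by (simp add: algebra_simps)
  also have "\<dots> = X / (K - R) * ((K - R) / (R * K))" unfolding 1 2 3[symmetric] by simp
  also have "\<dots> = X / (R * K)" using assms by simp
  finally show ?thesis .
qed

lemma sum_1_to_lessThan: "(\<Sum>j=1..s. F j) = (\<Sum>i<s. F (Suc i) :: real)"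
  by (induction s) (auto simp: atLeastAtMostSuc_conv)

lemma shifted_series:
  fixes \<alpha> :: real and s :: nat
  assumes "real s < \<alpha>"
  shows "(\<lambda>n. Cfun (real (Suc n) + \<alpha>) / ((real (Suc n) + real s) * (real (Suc n) + \<alpha>)))
     sums (Qfun (\<alpha> - real s) / (\<alpha> - real s)
           - (\<Sum>j=1..s. Cfun (\<alpha> + real j - real s) / (real j * (\<alpha> + real j - real s))))"
proof -
  define g where "g = \<alpha> - real s"
  have g: "g > 0" using assms by (simp add: g_def)
  define f where "f n = Cfun (g + real (Suc n)) / (real (Suc n) * (g + real (Suc n)))" for n
  have "f sums (Qfun g / g)" unfolding f_def by (rule key_lemma[OF g])
  then have "(\<lambda>i. f (i + s)) sums (Qfun g / g - (\<Sum>i<s. f i))" by (rule sums_split_initial_segment)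
  moreover have "f (i + s) = Cfun (real (Suc i) + \<alpha>) / ((real (Suc i) + real s) * (real (Suc i) + \<alpha>))" for i
    unfolding f_def g_def by (simp add: algebra_simps)
  moreover have "(\<Sum>i<s. f i) = (\<Sum>j=1..s. Cfun (\<alpha> + real j - real s) / (real j * (\<alpha> + real j - real s)))"
    unfolding sum_1_to_lessThan f_def g_def by (intro sum.cong) (auto simp: algebra_simps)
  ultimately show ?thesis by (simp add: g_def)
qed

theorem theorem2p7:
  fixes r k :: nat and \<alpha> :: real
  assumes "real k < \<alpha>" and "r < k"
  shows "(\<lambda>n. Cfun (real (Suc n) + \<alpha>) / ((real (Suc n) + real r) * (real (Suc n) + real k)))
    sums ((real k - \<alpha>) / (real k - real r) *
            (Qfun (\<alpha> - real k) / (\<alpha> - real k)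
             - (\<Sum>j=1..k. Cfun (\<alpha> + real j - real k) / (real j * (\<alpha> + real j - real k))))
        + (\<alpha> - real r) / (real k - real r) *
            (Qfun (\<alpha> - real r) / (\<alpha> - real r)
             - (\<Sum>j=1..r. Cfun (\<alpha> + real j - real r) / (real j * (\<alpha> + real j - real r)))))"
proof -
  have rk: "real r < real k" using assms(2) by simp
  have ra: "real r < \<alpha>" using assms(1) rk by linarith
  have A: "(\<lambda>n. (real k - \<alpha>) / (real k - real r) * (Cfun (real (Suc n) + \<alpha>) / ((real (Suc n) + real k) * (real (Suc n) + \<alpha>)))
        + (\<alpha> - real r) / (real k - real r) * (Cfun (real (Suc n) + \<alpha>) / ((real (Suc n) + real r) * (real (Suc n) + \<alpha>))))
     sums ((real k - \<alpha>) / (real k - real r) *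
            (Qfun (\<alpha> - real k) / (\<alpha> - real k)
             - (\<Sum>j=1..k. Cfun (\<alpha> + real j - real k) / (real j * (\<alpha> + real j - real k))))
        + (\<alpha> - real r) / (real k - real r) *
            (Qfun (\<alpha> - real r) / (\<alpha> - real r)
             - (\<Sum>j=1..r. Cfun (\<alpha> + real j - real r) / (real j * (\<alpha> + real j - real r)))))"
    by (intro sums_add sums_mult shifted_series assms(1) ra)
  have E: "(real k - \<alpha>) / (real k - real r) * (Cfun (real (Suc n) + \<alpha>) / ((real (Suc n) + real k) * (real (Suc n) + \<alpha>)))
        + (\<alpha> - real r) / (real k - real r) * (Cfun (real (Suc n) + \<alpha>) / ((real (Suc n) + real r) * (real (Suc n) + \<alpha>)))
        = Cfun (real (Suc n) + \<alpha>) / ((real (Suc n) + real r) * (real (Suc n) + real k))" for n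
  proof -
    have p: "real (Suc n) + \<alpha> > 0" "real (Suc n) + real k > 0" "real (Suc n) + real r > 0" "real k - real r > 0"
      using ra rk by auto
    have "real k - \<alpha> = (real (Suc n) + real k) - (real (Suc n) + \<alpha>)"
         "\<alpha> - real r = (real (Suc n) + \<alpha>) - (real (Suc n) + real r)"
         "real k - real r = (real (Suc n) + real k) - (real (Suc n) + real r)" by simp_all
    then show ?thesis using pf_identity[OF p(1,2,3), of "Cfun (real (Suc n) + \<alpha>)"] p(4)
      by (simp only:)
  qed
  show ?thesis using A unfolding E .
qed

end
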